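(* Let $S$ be a monoid and let $\mathbb{C}$ be a class of $S$-acts closed under taking subacts and products. Let $r_{\mathbb{C}}$ be the Hoehnke radical defined by $r_{\mathbb{C}}(A)=\bigwedge\{\chi\in\mathrm{Con}(A): A/\chi\in\mathbb{C}\}$, and let $\mathbb{R}_{r_{\mathbb{C}}}=\{A: r_{\mathbb{C}}(A)=\nabla_A\}$. Then: (1) $\mathbb{R}_{r_{\mathbb{C}}}$ is closed under homomorphic images; (2) $\mathbb{R}_{r_{\mathbb{C}}}$ has the inductive property; (3) $\mathbb{R}_{r_{\mathbb{C}}}$ is closed under Rees extensions.
   Context: An $S$-act over a monoid $S$ is a set $A$ with an action $(s,a)\mapsto sa$ satisfying $s(ta)=(st)a$ and $1a=a$; homomorphisms are action-preserving maps. An $S$-act is trivial if $|A|\le1$. Classes of $S$-acts are assumed closed under isomorphic copies and to contain all trivial $S$-acts. $\mathrm{Con}(A)$ is the lattice of congruences (action-compatible equivalence relations) on $A$, with $\nabla_A=A\times A$. A Rees congruence is a congruence each of whose classes is a subact or a singleton; $\Sigma_\rho$ denotes the set of classes of $\rho$ that are non-trivial subacts. A (normal) Hoehnke radical is an assignment $r$ of a congruence $r(A)$ to each $S$-act $A$ such that homomorphisms $f:A\to B$ map $r(A)$-related pairs to $r(B)$-related pairs and $r(A/r(A))$ is the diagonal. A class $\mathbb{C}'$ has the inductive property if for every ascending chain $(A_i)_{i\in I}$ of subacts (of some $S$-act) with all $A_i\in\mathbb{C}'$, the union $\bigcup_i A_i\in\mathbb{C}'$. $\mathbb{C}'$ is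 closed under Rees extensions if whenever $A$ has a Rees congruence $\chi$ with $\Sigma_\chi\subseteq\mathbb{C}'$ and $A/\chi\in\mathbb{C}'$, then $A\in\mathbb{C}'$. *)

theory Defs
  imports "HOL-Library.FuncSet"
begin

definition is_act :: "'a set \<Rightarrow> ('s::monoid_mult \<Rightarrow> 'a \<Rightarrow> 'a) \<Rightarrow> bool" where
  "is_act A act \<longleftrightarrow>
     (\<forall>s. \<forall>a\<in>A. act s a \<in> A) \<and>
     (\<forall>a\<in>A. act 1 a = a) \<and>
     (\<forall>s t. \<forall>a\<in>A. act s (act t a) = act (s * t) a)"

definition is_subact :: "'a set \<Rightarrow> 'a set \<Rightarrow> ('s::monoid_mult \<Rightarrow> 'a \<Rightarrow> 'a) \<Rightarrow> bool" where
  "is_subact B A act \<longleftrightarrow> B \<subseteq> A \<and> (\<forall>s. \<forall>b\<in>B. act s b \<in> B)"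

definition trivial_set :: "'a set \<Rightarrow> bool" where
  "trivial_set A \<longleftrightarrow> (\<forall>x\<in>A. \<forall>y\<in>A. x = y)"

definition act_hom :: "'a set \<Rightarrow> ('s::monoid_mult \<Rightarrow> 'a \<Rightarrow> 'a) \<Rightarrow> 'b set \<Rightarrow> ('s \<Rightarrow> 'b \<Rightarrow> 'b)
    \<Rightarrow> ('a \<Rightarrow> 'b) \<Rightarrow> bool" where
  "act_hom A act B act' f \<longleftrightarrow>
     (\<forall>a\<in>A. f a \<in> B) \<and> (\<forall>s. \<forall>a\<in>A. f (act s a) = act' s (f a))"

definition act_iso :: "'a set \<Rightarrow> ('s::monoid_mult \<Rightarrow> 'a \<Rightarrow> 'a) \<Rightarrow> 'b set \<Rightarrow> ('s \<Rightarrow> 'b \<Rightarrow> 'b)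
    \<Rightarrow> ('a \<Rightarrow> 'b) \<Rightarrow> bool" where
  "act_iso A act B act' f \<longleftrightarrow> act_hom A act B act' f \<and> bij_betw f A B"

definition act_cong :: "'a set \<Rightarrow> ('s::monoid_mult \<Rightarrow> 'a \<Rightarrow> 'a) \<Rightarrow> 'a rel \<Rightarrow> bool" where
  "act_cong A act \<rho> \<longleftrightarrow> equiv A \<rho> \<and> (\<forall>s a b. (a, b) \<in> \<rho> \<longrightarrow> (act s a, act s b) \<in> \<rho>)"

definition quot_act :: "('s::monoid_mult \<Rightarrow> 'a \<Rightarrow> 'a) \<Rightarrow> 'a rel \<Rightarrow> 's \<Rightarrow> 'a set \<Rightarrow> 'a set" where
  "quot_act act \<rho> s X = (\<Union>x\<in>X. \<rho> `` {act s x})"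

definition prod_act :: "'i set \<Rightarrow> ('i \<Rightarrow> 's::monoid_mult \<Rightarrow> 'a \<Rightarrow> 'a) \<Rightarrow> 's \<Rightarrow> ('i \<Rightarrow> 'a) \<Rightarrow> ('i \<Rightarrow> 'a)" where
  "prod_act I acts s f = restrict (\<lambda>i. acts i s (f i)) I"

text \<open>A class of S-acts is represented by a predicate C on acts whose elements
  live in a universe type 'u.  An act of any other type belongs to the class
  iff it is isomorphic to a member of C.\<close>
definition in_class :: "('u set \<Rightarrow> ('s::monoid_mult \<Rightarrow> 'u \<Rightarrow> 'u) \<Rightarrow> bool)
    \<Rightarrow> 'b set \<Rightarrow> ('s \<Rightarrow> 'b \<Rightarrow> 'b) \<Rightarrow> bool" where
  "in_class C B act \<longleftrightarrow> (\<exists>U uact f. C U uact \<and> act_iso B act U uact f)"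

definition act_class :: "('u set \<Rightarrow> ('s::monoid_mult \<Rightarrow> 'u \<Rightarrow> 'u) \<Rightarrow> bool) \<Rightarrow> bool" where
  "act_class C \<longleftrightarrow>
     (\<forall>A act. C A act \<longrightarrow> is_act A act) \<and>
     (\<forall>A act. is_act A act \<and> trivial_set A \<longrightarrow> C A act) \<and>
     (\<forall>A act B act' f. C A act \<and> is_act B act' \<and> act_iso A act B act' f \<longrightarrow> C B act')"

definition closed_subacts :: "('u set \<Rightarrow> ('s::monoid_mult \<Rightarrow> 'u \<Rightarrow> 'u) \<Rightarrow> bool) \<Rightarrow> bool" where
  "closed_subacts C \<longleftrightarrow> (\<forall>A act B. C A act \<and> is_subact B A act \<longrightarrow> C B act)"

text \<open>Closure under products (indexed by sets of type 'i), relativised to the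
  universe: the product belongs to the class (i.e. every isomorphic copy of it
  in the universe is in C).\<close>
definition closed_products :: "'i itself \<Rightarrow> ('u set \<Rightarrow> ('s::monoid_mult \<Rightarrow> 'u \<Rightarrow> 'u) \<Rightarrow> bool) \<Rightarrow> bool" where
  "closed_products _ C \<longleftrightarrow>
     (\<forall>(I::'i set) As acts. (\<forall>i\<in>I. C (As i) (acts i)) \<longrightarrow>
        (\<forall>P pact f. is_act P pact \<and> act_iso (Pi\<^sub>E I As) (prod_act I acts) P pact f \<longrightarrow> C P pact))"

text \<open>The Hoehnke radical r_C(A) = meet of all congruences chi with A/chi in C
  (the meet in Con(A) of the empty family being nabla_A).\<close>
definition rad :: "('u set \<Rightarrow> ('s::monoid_mult \<Rightarrow> 'u \<Rightarrow> 'u) \<Rightarrow> bool)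
    \<Rightarrow> 'b set \<Rightarrow> ('s \<Rightarrow> 'b \<Rightarrow> 'b) \<Rightarrow> 'b rel" where
  "rad C A act = (A \<times> A) \<inter> \<Inter>{\<chi>. act_cong A act \<chi> \<and> in_class C (A // \<chi>) (quot_act act \<chi>)}"

definition rad_class :: "('u set \<Rightarrow> ('s::monoid_mult \<Rightarrow> 'u \<Rightarrow> 'u) \<Rightarrow> bool)
    \<Rightarrow> 'b set \<Rightarrow> ('s \<Rightarrow> 'b \<Rightarrow> 'b) \<Rightarrow> bool" where
  "rad_class C A act \<longleftrightarrow> is_act A act \<and> rad C A act = A \<times> A"

definition rees_cong :: "'a set \<Rightarrow> ('s::monoid_mult \<Rightarrow> 'a \<Rightarrow> 'a) \<Rightarrow> 'a rel \<Rightarrow> bool" where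
  "rees_cong A act \<chi> \<longleftrightarrow> act_cong A act \<chi> \<and>
     (\<forall>X\<in>A // \<chi>. is_subact X A act \<or> (\<exists>x. X = {x}))"

definition Sigma_cls :: "'a set \<Rightarrow> ('s::monoid_mult \<Rightarrow> 'a \<Rightarrow> 'a) \<Rightarrow> 'a rel \<Rightarrow> 'a set set" where
  "Sigma_cls A act \<chi> = {X \<in> A // \<chi>. is_subact X A act \<and> \<not> trivial_set X}"

end

theory Submission
  imports Defs
begin


lemma quot_act_class:
  assumes "act_cong A act \<chi>" "a \<in> A"
  shows "quot_act act \<chi> s (\<chi>``{a}) = \<chi>``{act s a}"
proof -
  have eq: "equiv A \<chi>" using assms(1) unfolding act_cong_def by blast
  have aa: "a \<in> \<chi>``{a}" using eq assms(2) by (meson equiv_class_self)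
  have "\<And>x. x \<in> \<chi>``{a} \<Longrightarrow> \<chi>``{act s x} = \<chi>``{act s a}"
  proof -
    fix x assume "x \<in> \<chi>``{a}"
    then have "(a,x) \<in> \<chi>" by simp
    then have "(act s a, act s x) \<in> \<chi>" using assms(1) unfolding act_cong_def by blast
    then show "\<chi>``{act s x} = \<chi>``{act s a}" using eq by (metis equiv_class_eq)
  qed
  then show ?thesis unfolding quot_act_def using aa by blast
qed

lemma quot_is_act:
  assumes "is_act A act" "act_cong A act \<chi>"
  shows "is_act (A//\<chi>) (quot_act act \<chi>)"
  unfolding is_act_def
proof (intro conjI allI ballI)
  fix s X assume "X \<in> A//\<chi>"
  then obtain a where a: "a \<in> A" "X = \<chi>``{a}" by (auto elim: quotientE)
  show "quot_act act \<chi> s X \<in> A//\<chi>"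
    using a assms quot_act_class[OF assms(2)] unfolding is_act_def by (simp add: quotientI)
next
  fix X assume "X \<in> A//\<chi>"
  then obtain a where a: "a \<in> A" "X = \<chi>``{a}" by (auto elim: quotientE)
  show "quot_act act \<chi> 1 X = X"
    using a assms quot_act_class[OF assms(2)] unfolding is_act_def by simp
next
  fix s t X assume "X \<in> A//\<chi>"
  then obtain a where a: "a \<in> A" "X = \<chi>``{a}" by (auto elim: quotientE)
  have "act t a \<in> A" using a assms(1) unfolding is_act_def by blast
  then show "quot_act act \<chi> s (quot_act act \<chi> t X) = quot_act act \<chi> (s * t) X"
    using a assms quot_act_class[OF assms(2)] unfolding is_act_def by simp
qed

lemma K1:
  assumes "is_act A act"
  shows "rad_class C A act \<Longrightarrow>
    (\<forall>(Q::'b set) qact g. is_act Q qact \<and> in_class C Q qact \<and> act_hom A act Q qact g \<and> g`A = Q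
       \<longrightarrow> trivial_set Q)"
proof -
  assume R: "rad_class C A act"
  show "\<forall>(Q::'b set) qact g. is_act Q qact \<and> in_class C Q qact \<and> act_hom A act Q qact g \<and> g`A = Q
       \<longrightarrow> trivial_set Q"
  proof (intro allI impI)
    fix Q :: "'b set" and qact g
    assume H: "is_act Q qact \<and> in_class C Q qact \<and> act_hom A act Q qact g \<and> g`A = Q"
    define \<chi> where "\<chi> = {(a,b). a \<in> A \<and> b \<in> A \<and> g a = g b}"
    have eq: "equiv A \<chi>" unfolding \<chi>_def equiv_def refl_on_def sym_def trans_def by auto
    have cong: "act_cong A act \<chi>" unfolding act_cong_def
    proof (intro conjI eq allI impI)
      fix s a b assume "(a,b) \<in> \<chi>"
      then show "(act s a, act s b) \<in> \<chi>" using H assms unfolding \<chi>_def act_hom_def is_act_def by auto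
    qed
    obtain U uact \<phi> where U: "C U uact" "act_iso Q qact U uact \<phi>"
      using H unfolding in_class_def by blast
    define h where "h X = \<phi> (g (SOME x. x \<in> X))" for X
    have hcl: "h (\<chi>``{a}) = \<phi> (g a)" if "a \<in> A" for a
    proof -
      have "a \<in> \<chi>``{a}" using that eq by (meson equiv_class_self)
      then have "(SOME x. x \<in> \<chi>``{a}) \<in> \<chi>``{a}" by (rule someI)
      then have "g (SOME x. x \<in> \<chi>``{a}) = g a" unfolding \<chi>_def by auto
      then show ?thesis unfolding h_def by simp
    qed
    have iso: "act_iso (A//\<chi>) (quot_act act \<chi>) U uact h"
      unfolding act_iso_def act_hom_def
    proof (intro conjI ballI allI)
      fix X assume "X \<in> A//\<chi>"
      then obtain a where a: "a \<in> A" "X = \<chi>``{a}" by (auto elim: quotientE)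
      show "h X \<in> U" using a hcl H U unfolding act_iso_def act_hom_def by auto
    next
      fix s X assume "X \<in> A//\<chi>"
      then obtain a where a: "a \<in> A" "X = \<chi>``{a}" by (auto elim: quotientE)
      have "act s a \<in> A" using a assms unfolding is_act_def by blast
      then have "h (quot_act act \<chi> s X) = \<phi> (g (act s a))"
        using a quot_act_class[OF cong] hcl by simp
      also have "\<dots> = \<phi> (qact s (g a))" using H a unfolding act_hom_def by simp
      also have "\<dots> = uact s (\<phi> (g a))" using U H a unfolding act_iso_def act_hom_def by auto
      finally show "h (quot_act act \<chi> s X) = uact s (h X)" using a hcl by simp
    next
      show "bij_betw h (A//\<chi>) U" unfolding bij_betw_def
      proof
        show "inj_on h (A//\<chi>)"
        proof (rule inj_onI)
          fix X Y assume X: "X \<in> A//\<chi>" and Y: "Y \<in> A//\<chi>" and e: "h X = h Y"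
          obtain a where a: "a \<in> A" "X = \<chi>``{a}" using X by (auto elim: quotientE)
          obtain b where b: "b \<in> A" "Y = \<chi>``{b}" using Y by (auto elim: quotientE)
          have "\<phi> (g a) = \<phi> (g b)" using e a b hcl by simp
          moreover have "g a \<in> Q" "g b \<in> Q" using H a b by auto
          ultimately have "g a = g b" using U unfolding act_iso_def bij_betw_def inj_on_def by blast
          then have "(a,b) \<in> \<chi>" using a b unfolding \<chi>_def by simp
          then show "X = Y" using a b eq by (metis equiv_class_eq)
        qed
        show "h ` (A//\<chi>) = U"
        proof
          show "h ` (A//\<chi>) \<subseteq> U"
          proof
            fix u assume "u \<in> h ` (A//\<chi>)"
            then obtain a where "a \<in> A" "u = h (\<chi>``{a})" by (auto elim: quotientE)
            then show "u \<in> U" using hcl H U unfolding act_iso_def act_hom_def by auto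
          qed
          show "U \<subseteq> h ` (A//\<chi>)"
          proof
            fix u assume "u \<in> U"
            then obtain q where q: "q \<in> Q" "u = \<phi> q" using U unfolding act_iso_def bij_betw_def by auto
            then obtain a where a: "a \<in> A" "q = g a" using H by auto
            have "u = h (\<chi>``{a})" using a q hcl by simp
            then show "u \<in> h ` (A//\<chi>)" using a by (auto intro: quotientI)
          qed
        qed
      qed
    qed
    have "in_class C (A//\<chi>) (quot_act act \<chi>)" unfolding in_class_def using U iso by blast
    then have "rad C A act \<subseteq> \<chi>" unfolding rad_def using cong by blast
    then have "A \<times> A \<subseteq> \<chi>" using R unfolding rad_class_def by simp
    then show "trivial_set Q" using H unfolding trivial_set_def \<chi>_def by blast
  qed
qed

lemma K2:
  fixes A :: "'x set"
  assumes "is_act A act"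
  and T: "\<forall>(Q::'x set set) qact g. is_act Q qact \<and> in_class C Q qact \<and> act_hom A act Q qact g \<and> g`A = Q
       \<longrightarrow> trivial_set Q"
  shows "rad_class C A act"
proof -
  have "A \<times> A \<subseteq> rad C A act" unfolding rad_def
  proof (intro Int_greatest subset_refl Inter_greatest)
    fix \<chi> assume "\<chi> \<in> {\<chi>. act_cong A act \<chi> \<and> in_class C (A // \<chi>) (quot_act act \<chi>)}"
    then have c: "act_cong A act \<chi>" and i: "in_class C (A // \<chi>) (quot_act act \<chi>)" by auto
    have eq: "equiv A \<chi>" using c unfolding act_cong_def by blast
    have hom: "act_hom A act (A//\<chi>) (quot_act act \<chi>) (\<lambda>x. \<chi>``{x})"
      unfolding act_hom_def using quot_act_class[OF c] by (auto intro: quotientI)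
    have "(\<lambda>x. \<chi>``{x}) ` A = A//\<chi>" unfolding quotient_def by auto
    then have "trivial_set (A//\<chi>)" using T quot_is_act[OF assms(1) c] i hom by blast
    show "A \<times> A \<subseteq> \<chi>"
    proof (rule subrelI)
      fix a b assume ab: "(a,b) \<in> A \<times> A"
      then have "\<chi>``{a} \<in> A//\<chi>" "\<chi>``{b} \<in> A//\<chi>" by (auto intro: quotientI)
      then have "\<chi>``{a} = \<chi>``{b}" using \<open>trivial_set (A//\<chi>)\<close> unfolding trivial_set_def by blast
      then show "(a,b) \<in> \<chi>" using ab eq equiv_class_eq_iff by fast
    qed
  qed
  moreover have "rad C A act \<subseteq> A \<times> A" unfolding rad_def by blast
  ultimately show "rad_class C A act" unfolding rad_class_def using assms by blast
qed



lemma sub_in_class: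
  assumes "act_class C" "closed_subacts C" "in_class C Q qact" "Q' \<subseteq> Q"
    "\<forall>s. \<forall>q\<in>Q'. qact s q \<in> Q'"
  shows "in_class C Q' qact"
proof -
  obtain U uact \<phi> where U: "C U uact" "act_iso Q qact U uact \<phi>"
    using assms(3) unfolding in_class_def by blast
  have "is_subact (\<phi>`Q') U uact" unfolding is_subact_def
  proof (intro conjI allI ballI)
    show "\<phi>`Q' \<subseteq> U" using U assms(4) unfolding act_iso_def act_hom_def by blast
  next
    fix s u assume "u \<in> \<phi>`Q'"
    then obtain q where q: "q \<in> Q'" "u = \<phi> q" by blast
    have "uact s u = \<phi> (qact s q)" using U q assms(4) unfolding act_iso_def act_hom_def by auto
    then show "uact s u \<in> \<phi>`Q'" using q assms(5) by blast
  qed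
  then have "C (\<phi>`Q') uact" using assms(2) U unfolding closed_subacts_def by blast
  moreover have "act_iso Q' qact (\<phi>`Q') uact \<phi>"
    unfolding act_iso_def act_hom_def bij_betw_def
    using U assms(4,5) unfolding act_iso_def act_hom_def bij_betw_def
    by (auto intro: inj_on_subset)
  ultimately show ?thesis unfolding in_class_def by blast
qed

lemma sub_is_act: "is_act A act \<Longrightarrow> is_subact Y A act \<Longrightarrow> is_act Y act"
  unfolding is_act_def is_subact_def by blast

lemma restr_trivial:
  assumes "act_class C" "closed_subacts C" "rad_class C Y act" "is_subact Y A act"
    "is_act Q qact" "in_class C Q qact" "act_hom A act Q qact g"
  shows "trivial_set (g`Y)"
proof -
  have YA: "Y \<subseteq> A" and cl: "\<forall>s. \<forall>b\<in>Y. act s b \<in> Y" using assms(4) unfolding is_subact_def by auto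
  have sub: "g`Y \<subseteq> Q" using YA assms(7) unfolding act_hom_def by blast
  have cl2: "\<forall>s. \<forall>q\<in>g`Y. qact s q \<in> g`Y"
  proof (intro allI ballI)
    fix s q assume "q \<in> g`Y"
    then obtain y where y: "y \<in> Y" "q = g y" by blast
    then have "qact s q = g (act s y)" using YA assms(7) unfolding act_hom_def by auto
    then show "qact s q \<in> g`Y" using y cl by blast
  qed
  have "is_act (g`Y) qact" using assms(5) sub cl2 unfolding is_act_def by blast
  moreover have "in_class C (g`Y) qact" using sub_in_class[OF assms(1,2,6) sub cl2] .
  moreover have "act_hom Y act (g`Y) qact g" using YA assms(7) unfolding act_hom_def by blast
  moreover have "is_act Y act" using assms(3) unfolding rad_class_def by blast
  ultimately show ?thesis using K1[of Y act C] assms(3) by blast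
qed



lemma part1:
  fixes C :: "'u set \<Rightarrow> ('s::monoid_mult \<Rightarrow> 'u \<Rightarrow> 'u) \<Rightarrow> bool"
  assumes "act_class C"
    and "closed_subacts C"
  shows "(\<forall>(A::'u set) act (B::'b set) act' f.
        rad_class C A act \<and> is_act B act' \<and> act_hom A act B act' f \<and> f ` A = B
        \<longrightarrow> rad_class C B act')"
proof (intro allI impI)
  fix A :: "'u set" and act and B :: "'b set" and act' f
  assume H: "rad_class C A act \<and> is_act B act' \<and> act_hom A act B act' f \<and> f ` A = B"
  show "rad_class C B act'"
  proof (rule K2)
    show "is_act B act'" using H by blast
    show "\<forall>(Q::'b set set) qact g. is_act Q qact \<and> in_class C Q qact \<and> act_hom B act' Q qact g \<and> g`B = Q
       \<longrightarrow> trivial_set Q"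
    proof (intro allI impI)
      fix Q :: "'b set set" and qact g
      assume G: "is_act Q qact \<and> in_class C Q qact \<and> act_hom B act' Q qact g \<and> g`B = Q"
      have "act_hom A act Q qact (g \<circ> f)" using H G unfolding act_hom_def by auto
      moreover have "(g \<circ> f)`A = Q" using H G by (metis image_comp)
      moreover have "is_act A act" using H unfolding rad_class_def by blast
      ultimately have "is_act Q qact \<and> in_class C Q qact \<and> act_hom A act Q qact (g \<circ> f) \<and> (g \<circ> f)`A = Q"
        using G by blast
      then show "trivial_set Q" by (rule K1[OF \<open>is_act A act\<close> conjunct1[OF H], rule_format])
    qed
  qed
qed



lemma part2:
  fixes C :: "'u set \<Rightarrow> ('s::monoid_mult \<Rightarrow> 'u \<Rightarrow> 'u) \<Rightarrow> bool"
  assumes "act_class C"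
    and "closed_subacts C"
  shows "(\<forall>(X::'u set) act (\<A>::'u set set).
        is_act X act \<and> (\<forall>Y\<in>\<A>. is_subact Y X act \<and> rad_class C Y act) \<and>
        (\<forall>Y\<in>\<A>. \<forall>Z\<in>\<A>. Y \<subseteq> Z \<or> Z \<subseteq> Y)
        \<longrightarrow> rad_class C (\<Union>\<A>) act)"
proof (intro allI impI)
  fix X :: "'u set" and act and \<A> :: "'u set set"
  assume H: "is_act X act \<and> (\<forall>Y\<in>\<A>. is_subact Y X act \<and> rad_class C Y act) \<and>
        (\<forall>Y\<in>\<A>. \<forall>Z\<in>\<A>. Y \<subseteq> Z \<or> Z \<subseteq> Y)"
  have sub: "is_subact W (\<Union>\<A>) act" if "W \<in> \<A>" for W
  proof -
    have "is_subact W X act" using H that by simp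
    then show ?thesis using that unfolding is_subact_def by blast
  qed
  show "rad_class C (\<Union>\<A>) act"
  proof (rule K2)
    have "\<forall>Y\<in>\<A>. is_subact Y X act" using H by simp
    then have "is_subact (\<Union>\<A>) X act" unfolding is_subact_def by blast
    moreover have "is_act X act" using H by simp
    ultimately show ia: "is_act (\<Union>\<A>) act" using sub_is_act by blast
    show "\<forall>(Q::'u set set) qact g. is_act Q qact \<and> in_class C Q qact \<and> act_hom (\<Union>\<A>) act Q qact g \<and> g`(\<Union>\<A>) = Q
       \<longrightarrow> trivial_set Q"
    proof (intro allI impI)
      fix Q :: "'u set set" and qact g
      assume G: "is_act Q qact \<and> in_class C Q qact \<and> act_hom (\<Union>\<A>) act Q qact g \<and> g`(\<Union>\<A>) = Q"
      show "trivial_set Q" unfolding trivial_set_def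
      proof (intro ballI)
        fix p q assume "p \<in> Q" "q \<in> Q"
        then obtain a b Y Z where ab: "a \<in> Y" "Y \<in> \<A>" "b \<in> Z" "Z \<in> \<A>" "p = g a" "q = g b"
          using G by blast
        obtain W where W: "W \<in> \<A>" "a \<in> W" "b \<in> W" using H ab by blast
        have "trivial_set (g`W)"
          using restr_trivial[OF assms(1,2) _ sub[OF W(1)], of Q qact g] H W G by blast
        then show "p = q" using W ab unfolding trivial_set_def by blast
      qed
    qed
  qed
qed



lemma part3:
  fixes C :: "'u set \<Rightarrow> ('s::monoid_mult \<Rightarrow> 'u \<Rightarrow> 'u) \<Rightarrow> bool"
  assumes "act_class C"
    and "closed_subacts C"
  shows "(\<forall>(A::'u set) act \<chi>.
        is_act A act \<and> rees_cong A act \<chi> \<and>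
        (\<forall>X\<in>Sigma_cls A act \<chi>. rad_class C X act) \<and>
        rad_class C (A // \<chi>) (quot_act act \<chi>)
        \<longrightarrow> rad_class C A act)"
proof (intro allI impI)
  fix A :: "'u set" and act \<chi>
  assume H: "is_act A act \<and> rees_cong A act \<chi> \<and>
        (\<forall>X\<in>Sigma_cls A act \<chi>. rad_class C X act) \<and>
        rad_class C (A // \<chi>) (quot_act act \<chi>)"
  have c: "act_cong A act \<chi>" using H unfolding rees_cong_def by blast
  have eq: "equiv A \<chi>" using c unfolding act_cong_def by blast
  show "rad_class C A act"
  proof (rule K2)
    show "is_act A act" using H by blast
    show "\<forall>(Q::'u set set) qact g. is_act Q qact \<and> in_class C Q qact \<and> act_hom A act Q qact g \<and> g`A = Q
       \<longrightarrow> trivial_set Q"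
    proof (intro allI impI)
      fix Q :: "'u set set" and qact g
      assume G: "is_act Q qact \<and> in_class C Q qact \<and> act_hom A act Q qact g \<and> g`A = Q"
      have const: "g x = g y" if X: "X \<in> A//\<chi>" and xy: "x \<in> X" "y \<in> X" for X x y
      proof -
        have "is_subact X A act \<or> (\<exists>z. X = {z})" using H X unfolding rees_cong_def by blast
        then show ?thesis
        proof
          assume sa: "is_subact X A act"
          show ?thesis
          proof (cases "trivial_set X")
            case True then show ?thesis using xy unfolding trivial_set_def by metis
          next
            case False
            then have "X \<in> Sigma_cls A act \<chi>" using X sa unfolding Sigma_cls_def by blast
            then have "rad_class C X act" using H by blast
            then have "trivial_set (g`X)"
              using restr_trivial[OF assms(1,2) \<open>rad_class C X act\<close> sa, of Q qact g] G by blast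
            then show ?thesis using xy unfolding trivial_set_def by blast
          qed
        next
          assume "\<exists>z. X = {z}" then show ?thesis using xy by blast
        qed
      qed
      define h where "h X = g (SOME x. x \<in> X)" for X
      have hcl: "h (\<chi>``{a}) = g a" if "a \<in> A" for a
      proof -
        have a: "a \<in> \<chi>``{a}" using that eq by (meson equiv_class_self)
        then have "(SOME x. x \<in> \<chi>``{a}) \<in> \<chi>``{a}" by (rule someI)
        then show ?thesis unfolding h_def using const[of "\<chi>``{a}"] a that by (auto intro: quotientI)
      qed
      have hom: "act_hom (A//\<chi>) (quot_act act \<chi>) Q qact h" unfolding act_hom_def
      proof (intro conjI ballI allI)
        fix X assume "X \<in> A//\<chi>"
        then obtain a where a: "a \<in> A" "X = \<chi>``{a}" by (auto elim: quotientE)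
        then show "h X \<in> Q" using hcl G unfolding act_hom_def by auto
      next
        fix s X assume "X \<in> A//\<chi>"
        then obtain a where a: "a \<in> A" "X = \<chi>``{a}" by (auto elim: quotientE)
        have "act s a \<in> A" using a H unfolding is_act_def by blast
        then have "h (quot_act act \<chi> s X) = g (act s a)"
          using a quot_act_class[OF c] hcl by simp
        also have "\<dots> = qact s (g a)" using G a unfolding act_hom_def by simp
        finally show "h (quot_act act \<chi> s X) = qact s (h X)" using a hcl by simp
      qed
      have surj: "h ` (A//\<chi>) = Q"
      proof
        show "h ` (A//\<chi>) \<subseteq> Q" using hom unfolding act_hom_def by blast
        show "Q \<subseteq> h ` (A//\<chi>)"
        proof
          fix q assume "q \<in> Q"
          then obtain a where a: "a \<in> A" "q = g a" using G by blast
          then have "q = h (\<chi>``{a})" using hcl by simp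
          then show "q \<in> h ` (A//\<chi>)" using a by (auto intro: quotientI)
        qed
      qed
      have ia: "is_act (A//\<chi>) (quot_act act \<chi>)" using H unfolding rad_class_def by blast
      have "is_act Q qact \<and> in_class C Q qact \<and> act_hom (A//\<chi>) (quot_act act \<chi>) Q qact h \<and> h`(A//\<chi>) = Q"
        using G hom surj by blast
      then show "trivial_set Q" by (rule K1[OF ia conjunct2[OF conjunct2[OF conjunct2[OF H]]], rule_format])
    qed
  qed
qed


theorem lemma2p4:
  fixes C :: "'u set \<Rightarrow> ('s::monoid_mult \<Rightarrow> 'u \<Rightarrow> 'u) \<Rightarrow> bool"
  assumes "act_class C"
    and "closed_subacts C"
    and "closed_products TYPE('i) C"
  shows
    "(\<forall>(A::'u set) act (B::'b set) act' f.
        rad_class C A act \<and> is_act B act' \<and> act_hom A act B act' f \<and> f ` A = B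
        \<longrightarrow> rad_class C B act')
   \<and> (\<forall>(X::'u set) act (\<A>::'u set set).
        is_act X act \<and> (\<forall>Y\<in>\<A>. is_subact Y X act \<and> rad_class C Y act) \<and>
        (\<forall>Y\<in>\<A>. \<forall>Z\<in>\<A>. Y \<subseteq> Z \<or> Z \<subseteq> Y)
        \<longrightarrow> rad_class C (\<Union>\<A>) act)
   \<and> (\<forall>(A::'u set) act \<chi>.
        is_act A act \<and> rees_cong A act \<chi> \<and>
        (\<forall>X\<in>Sigma_cls A act \<chi>. rad_class C X act) \<and>
        rad_class C (A // \<chi>) (quot_act act \<chi>)
        \<longrightarrow> rad_class C A act)"
  using part1[OF assms(1,2)] part2[OF assms(1,2)] part3[OF assms(1,2)] by blast

end
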